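(* For any strings $S_1,S_2,S_3\in\Sigma^*$: (i) $\mathrm{RSD}(S_1,S_2)=\mathrm{RSD}(S_2,S_1)$; (ii) $0\le \mathrm{RSD}(S_1,S_2)\le 1$; (iii) $\mathrm{RSD}(S_1,S_2)=0$ if and only if $S_1=S_2$; (iv) $\mathrm{RSD}(S_1,S_3)\le \mathrm{RSD}(S_1,S_2)+\mathrm{RSD}(S_2,S_3)$. In particular $\mathrm{RSD}$ is a metric on any set of strings.
   Context: $\mathrm{ED}(c,c')$ is the minimum number of insertions and deletions transforming $c$ into $c'$. For a string $S$ of length $n$ and integers $i\le j$, $S[i,j]$ is the substring from position $i$ through $j$, $S(i,j]=S[i+1,j]$; if $i<1$ then $S[i,j]$ denotes $\bot^{-i+1}\cdot S[1,j]$ where $\bot$ is a special symbol not in $\Sigma$ (padding on the left). The relative suffix distance is $\mathrm{RSD}(S,S')=\max_{k>0}\frac{\mathrm{ED}\big(S(|S|-k,|S|],\,S'(|S'|-k,|S'|]\big)}{2k}$. *)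

theory Defs
  imports Complex_Main
begin

definition indel_step :: "'b list \<Rightarrow> 'b list \<Rightarrow> bool" where
  "indel_step x y \<longleftrightarrow>
     (\<exists>u v c. x = u @ v \<and> y = u @ c # v) \<or> (\<exists>u v c. x = u @ c # v \<and> y = u @ v)"

definition ED :: "'b list \<Rightarrow> 'b list \<Rightarrow> nat" where
  "ED x y = (LEAST n. (indel_step ^^ n) x y)"

(* S(|S|-k, |S|], padded on the left with the special symbol \<bottom> = None \<notin> Some ` \<Sigma> *)
definition padded_suffix :: "nat \<Rightarrow> 'a list \<Rightarrow> 'a option list" where
  "padded_suffix k S = replicate (k - length S) None @ map Some (drop (length S - k) S)"

definition RSD :: "'a list \<Rightarrow> 'a list \<Rightarrow> real" where
  "RSD S S' = (SUP k\<in>{0<..}. real (ED (padded_suffix k S) (padded_suffix k S')) / (2 * real k))"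

end

theory Submission
  imports Defs
begin

lemma indel_sym: "indel_step x y \<Longrightarrow> indel_step y x"
  unfolding indel_step_def by blast

lemma pow_sym: "(indel_step ^^ n) x y \<Longrightarrow> (indel_step ^^ n) y x"
proof (induction n arbitrary: x y)
  case 0 then show ?case by simp
next
  case (Suc n)
  from Suc.prems obtain z where a: "(indel_step ^^ n) x z" and b: "indel_step z y"
    by (rule relpowp_Suc_E)
  show ?case using Suc.IH[OF a] indel_sym[OF b] by (rule relpowp_Suc_I2[rotated])
qed

lemma del_all: "(indel_step ^^ length x) x []"
proof (induction x)
  case Nil then show ?case by simp
next
  case (Cons c v)
  have "indel_step (c # v) v" unfolding indel_step_def
    by (rule disjI2) (rule exI[of _ "[]"], auto)
  then show ?case using Cons relpowp_Suc_I2 by (metis length_Cons)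
qed

lemma path_exists: "(indel_step ^^ (length x + length y)) x y"
  using relpowp_trans[OF del_all[of x] pow_sym[OF del_all[of y]]] .

lemma ED_path: "(indel_step ^^ ED x y) x y"
  unfolding ED_def by (rule LeastI, rule path_exists)

lemma ED_le: "(indel_step ^^ n) x y \<Longrightarrow> ED x y \<le> n"
  unfolding ED_def by (rule Least_le)

lemma ED_bound: "ED x y \<le> length x + length y"
  by (rule ED_le, rule path_exists)

lemma ED_sym: "ED x y = ED y x"
  by (metis ED_le ED_path pow_sym le_antisym)

lemma ED_tri: "ED x z \<le> ED x y + ED y z"
  by (rule ED_le, rule relpowp_trans[OF ED_path ED_path])

lemma ED_zero: "ED x y = 0 \<longleftrightarrow> x = y"
proof
  assume "ED x y = 0" then show "x = y" using ED_path[of x y] by simp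
next
  assume "x = y" then show "ED x y = 0" using ED_le[of 0 x x] by simp
qed

lemma len_ps: "length (padded_suffix k S) = k"
  unfolding padded_suffix_def by simp

definition fr :: "'a list \<Rightarrow> 'a list \<Rightarrow> nat \<Rightarrow> real" where
  "fr S S' k = real (ED (padded_suffix k S) (padded_suffix k S')) / (2 * real k)"

lemma RSD_fr: "RSD S S' = (SUP k\<in>{0<..}. fr S S' k)"
  unfolding RSD_def fr_def by simp

lemma fr_le1: "k > 0 \<Longrightarrow> fr S S' k \<le> 1"
proof -
  assume k: "k > 0"
  have "ED (padded_suffix k S) (padded_suffix k S') \<le> 2 * k"
    using ED_bound[of "padded_suffix k S" "padded_suffix k S'"] by (simp add: len_ps)
  then have "real (ED (padded_suffix k S) (padded_suffix k S')) \<le> 2 * real k" by linarith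
  then show ?thesis unfolding fr_def using k by (simp add: divide_le_eq)
qed

lemma fr_ge0: "fr S S' k \<ge> 0" unfolding fr_def by simp

lemma bdd: "bdd_above (fr S S' ` {0<..})"
  by (rule bdd_aboveI[of _ 1]) (auto intro: fr_le1)

lemma fr_le_RSD: "k > 0 \<Longrightarrow> fr S S' k \<le> RSD S S'"
  unfolding RSD_fr by (rule cSUP_upper) (auto intro: bdd)

lemma fr_sym: "fr S S' k = fr S' S k"
  unfolding fr_def by (simp add: ED_sym)

lemma fr_tri: "fr S1 S3 k \<le> fr S1 S2 k + fr S2 S3 k"
proof -
  have "real (ED (padded_suffix k S1) (padded_suffix k S3)) \<le>
    real (ED (padded_suffix k S1) (padded_suffix k S2)) + real (ED (padded_suffix k S2) (padded_suffix k S3))"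
    using ED_tri by (metis of_nat_add of_nat_mono)
  then show ?thesis unfolding fr_def by (simp add: add_divide_distrib[symmetric] divide_right_mono)
qed

lemma ps_inj: "k \<ge> length S \<Longrightarrow> removeAll None (padded_suffix k S) = map Some S"
  unfolding padded_suffix_def by (simp add: removeAll_filter_not_eq filter_map comp_def)

theorem lemma14:
  fixes S1 S2 S3 :: "'a list"
  shows "RSD S1 S2 = RSD S2 S1
    \<and> (0 \<le> RSD S1 S2 \<and> RSD S1 S2 \<le> 1)
    \<and> (RSD S1 S2 = 0 \<longleftrightarrow> S1 = S2)
    \<and> RSD S1 S3 \<le> RSD S1 S2 + RSD S2 S3"
proof (intro conjI)
  show "RSD S1 S2 = RSD S2 S1" unfolding RSD_fr by (simp add: fr_sym)
  show "0 \<le> RSD S1 S2" using fr_le_RSD[of 1 S1 S2] fr_ge0[of S1 S2 1] by simp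
  show "RSD S1 S2 \<le> 1" unfolding RSD_fr by (rule cSUP_least) (auto intro: fr_le1)
  show "RSD S1 S3 \<le> RSD S1 S2 + RSD S2 S3" unfolding RSD_fr[of S1 S3]
  proof (rule cSUP_least)
    show "{0<..} \<noteq> ({}::nat set)" by auto
    fix k :: nat assume "k \<in> {0<..}"
    then have "fr S1 S2 k \<le> RSD S1 S2" "fr S2 S3 k \<le> RSD S2 S3" by (auto intro: fr_le_RSD)
    then show "fr S1 S3 k \<le> RSD S1 S2 + RSD S2 S3" using fr_tri[of S1 S3 k S2] by linarith
  qed
  show "RSD S1 S2 = 0 \<longleftrightarrow> S1 = S2"
  proof
    assume "S1 = S2"
    then have "\<And>k. fr S1 S2 k = 0" unfolding fr_def by (simp add: ED_zero)
    then show "RSD S1 S2 = 0" unfolding RSD_fr by simp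
  next
    assume z: "RSD S1 S2 = 0"
    define k where "k = Suc (length S1 + length S2)"
    have "fr S1 S2 k \<le> 0" using fr_le_RSD[of k S1 S2] z k_def by simp
    then have "ED (padded_suffix k S1) (padded_suffix k S2) = 0"
      unfolding fr_def k_def by (simp add: divide_le_0_iff)
    then have "padded_suffix k S1 = padded_suffix k S2" by (simp add: ED_zero)
    then have "map Some S1 = map Some S2" using ps_inj[of S1 k] ps_inj[of S2 k] k_def by simp
    then show "S1 = S2" by (simp add: inj_map_eq_map)
  qed
qed

end
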